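(* Let $M=\frac32-\sqrt2$ and for $\xi\in[0,\frac14]$ define $$G_\xi(w,f)=(1-f)\,y\left(\tfrac12-y\right)+4M\xi\cdot\frac{w}{1-f},\qquad y=1-\frac{w}{1-f}.$$ Let $\kappa=\frac{1019}{1000}$. For all $w_1,w_2,w_3\in[0,\frac12]$ and $f_1,f_2,f_3\in[0,\frac12]$ such that $\frac{1-f_i}{2}\le w_i\le1-f_i$ for $i=1,2,3$, and for every $\xi\in[0,\frac14]$, $$\tfrac12\bigl(G_\xi(w_1,f_1)+G_\xi(w_2,f_2)\bigr)\le\kappa\cdot G_\xi\!\left(\tfrac{w_1+w_2}{2},\tfrac{f_1+f_2}{2}\right),$$ $$\tfrac13\bigl(G_\xi(w_1,f_1)+G_\xi(w_2,f_2)+G_\xi(w_3,f_3)\bigr)\le\kappa\cdot G_\xi\!\left(\tfrac{w_1+w_2+w_3}{3},\tfrac{f_1+f_2+f_3}{3}\right).$$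
   Context: Here $(1-f)y(\frac12-y)$ with $y=1-\frac{w}{1-f}$ is the quantity $\frac{1-f}{\Phi(1-\frac w{1-f})}$ for the potential $\Phi(x)=\frac{1}{x(\frac12-x)}$; $M=\frac32-\sqrt2=\sup_{0\le x\le1/2}\frac{x(\frac12-x)}{1-x}$. *)

theory Defs
  imports Complex_Main
begin

definition M_const :: real where
  "M_const = 3/2 - sqrt 2"

definition G :: "real \<Rightarrow> real \<Rightarrow> real \<Rightarrow> real" where
  "G \<xi> w f = (let y = 1 - w / (1 - f) in
      (1 - f) * y * (1/2 - y) + 4 * M_const * \<xi> * (w / (1 - f)))"

definition kappa :: real where
  "kappa = 1019 / 1000"

end

theory Submission
  imports Defs
begin

lemma pt: fixes g e k :: real assumes "1/2 \<le> g" shows "g*e^2 - k*e + k^2/2 \<ge> 0"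
proof -
  have "(1/2)*e^2 \<le> g*e^2" using assms by (intro mult_right_mono) auto
  moreover have "(e-k)^2 \<ge> 0" by simp
  moreover have "(e-k)^2 = e^2 - 2*k*e + k^2" by (simp add: power2_eq_square algebra_simps)
  ultimately show ?thesis by linarith
qed

lemma sqb: fixes g :: real assumes "1/2 \<le> g" "g \<le> 1" shows "g^2 \<le> 3*g/2 - 1/2"
proof -
  have "(g - 1/2)*(1-g) \<ge> 0" using assms by simp
  moreover have "(g - 1/2)*(1-g) = 3*g/2 - 1/2 - g^2" by (simp add: power2_eq_square field_simps)
  ultimately show ?thesis by linarith
qed

lemma core3:
  fixes g1 g2 g3 y1 y2 y3 c Y :: real
  assumes g: "1/2 \<le> g1" "g1 \<le> 1" "1/2 \<le> g2" "g2 \<le> 1" "1/2 \<le> g3" "g3 \<le> 1"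
    and y: "0 \<le> y1" "y1 \<le> 1/2" "0 \<le> y2" "y2 \<le> 1/2" "0 \<le> y3" "y3 \<le> 1/2"
    and c: "0 \<le> c" "c \<le> 9/100"
    and Y: "Y = (g1*y1+g2*y2+g3*y3)/(g1+g2+g3)"
  shows "((g1*y1*(1/2-y1) + c*(1-y1)) + (g2*y2*(1/2-y2) + c*(1-y2)) + (g3*y3*(1/2-y3) + c*(1-y3)))/3
     \<le> kappa * ((g1+g2+g3)/3 * Y*(1/2-Y) + c*(1-Y))"
proof -
  define gb where "gb = (g1+g2+g3)/3"
  have gbp: "gb \<ge> 1/2" "gb \<le> 1" using g by (auto simp: gb_def)
  have S: "g1+g2+g3 > 0" using g by simp
  have YS: "Y*(g1+g2+g3) = g1*y1+g2*y2+g3*y3" using Y S by simp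
  have sumY: "g1*(y1-Y) + g2*(y2-Y) + g3*(y3-Y) = 0" using YS by (simp add: algebra_simps)
  have Y0: "0 \<le> Y" using Y S g y by simp
  have "g1*y1+g2*y2+g3*y3 \<le> (g1+g2+g3)/2"
  proof -
    have "g1*y1 \<le> g1*(1/2)" "g2*y2 \<le> g2*(1/2)" "g3*y3 \<le> g3*(1/2)"
      using g y by (intro mult_left_mono; simp)+
    then show ?thesis by (simp add: field_simps)
  qed
  then have Y1: "Y \<le> 1/2" using Y S by (simp add: divide_le_eq)
  define e1 e2 e3 where "e1 = y1 - Y" and "e2 = y2 - Y" and "e3 = y3 - Y"
  define k1 k2 k3 where "k1 = c*(g1-gb)/gb" and "k2 = c*(g2-gb)/gb" and "k3 = c*(g3-gb)/gb"
  have A: "g1*y1*(1/2-y1) + g2*y2*(1/2-y2) + g3*y3*(1/2-y3)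
     = (g1+g2+g3)*Y*(1/2-Y) + (1/2-2*Y)*(g1*e1+g2*e2+g3*e3) - (g1*e1^2+g2*e2^2+g3*e3^2)"
    by (simp add: e1_def e2_def e3_def power2_eq_square algebra_simps)
  have A': "g1*y1*(1/2-y1) + g2*y2*(1/2-y2) + g3*y3*(1/2-y3)
     = (g1+g2+g3)*Y*(1/2-Y) - (g1*e1^2+g2*e2^2+g3*e3^2)"
    using A sumY by (simp add: e1_def e2_def e3_def)
  have B: "k1*e1+k2*e2+k3*e3 = -c*(e1+e2+e3)"
  proof -
    have "k1*e1+k2*e2+k3*e3 = c*(g1*e1+g2*e2+g3*e3)/gb - c*(e1+e2+e3)"
      using gbp by (simp add: k1_def k2_def k3_def field_simps)
    then show ?thesis using sumY by (simp add: e1_def e2_def e3_def)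
  qed
  have L: "((g1*y1*(1/2-y1) + c*(1-y1)) + (g2*y2*(1/2-y2) + c*(1-y2)) + (g3*y3*(1/2-y3) + c*(1-y3)))/3
     = (gb * Y*(1/2-Y) + c*(1-Y)) - ((g1*e1^2 - k1*e1) + (g2*e2^2 - k2*e2) + (g3*e3^2 - k3*e3))/3"
  proof -
    have C: "c*(1-y1)+c*(1-y2)+c*(1-y3) = 3*c*(1-Y) - c*(e1+e2+e3)"
      by (simp add: e1_def e2_def e3_def algebra_simps)
    have "((g1*y1*(1/2-y1) + c*(1-y1)) + (g2*y2*(1/2-y2) + c*(1-y2)) + (g3*y3*(1/2-y3) + c*(1-y3)))/3
      = ((g1*y1*(1/2-y1) + g2*y2*(1/2-y2) + g3*y3*(1/2-y3)) + (c*(1-y1)+c*(1-y2)+c*(1-y3)))/3"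
      by (simp add: algebra_simps)
    also have "\<dots> = ((g1+g2+g3)*Y*(1/2-Y) - (g1*e1^2+g2*e2^2+g3*e3^2) + (3*c*(1-Y) - c*(e1+e2+e3)))/3"
      by (simp only: A' C)
    also have "\<dots> = ((g1+g2+g3)*Y*(1/2-Y) - (g1*e1^2+g2*e2^2+g3*e3^2) + (3*c*(1-Y) + (k1*e1+k2*e2+k3*e3)))/3"
      by (subst B) simp
    also have "\<dots> = (gb * Y*(1/2-Y) + c*(1-Y)) - ((g1*e1^2 - k1*e1) + (g2*e2^2 - k2*e2) + (g3*e3^2 - k3*e3))/3"
      by (simp add: gb_def field_simps)
    finally show ?thesis .
  qed
  have P: "(g1*e1^2 - k1*e1) + (g2*e2^2 - k2*e2) + (g3*e3^2 - k3*e3) \<ge> -(k1^2+k2^2+k3^2)/2"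
    using pt[OF g(1), of e1 k1] pt[OF g(3), of e2 k2] pt[OF g(5), of e3 k3] by simp
  have V: "(g1-gb)^2+(g2-gb)^2+(g3-gb)^2 \<le> 3*gb^2/8"
  proof -
    have "(g1-gb)^2+(g2-gb)^2+(g3-gb)^2 = g1^2+g2^2+g3^2 - 3*gb^2"
      by (simp add: gb_def power2_eq_square field_simps)
    also have "\<dots> \<le> 9*gb/2 - 3/2 - 3*gb^2" using sqb[OF g(1,2)] sqb[OF g(3,4)] sqb[OF g(5,6)]
      proof -
        have "g1+g2+g3 = 3*gb" by (simp add: gb_def)
        then show ?thesis using sqb[OF g(1,2)] sqb[OF g(3,4)] sqb[OF g(5,6)] by linarith
      qed
    also have "\<dots> \<le> 3*gb^2/8"
    proof -
      have "(3*gb-2)^2 \<ge> 0" by simp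
      then show ?thesis by (simp add: power2_eq_square algebra_simps)
    qed
    finally show ?thesis .
  qed
  have K: "k1^2+k2^2+k3^2 \<le> 3*c^2/8"
  proof -
    have "k1^2+k2^2+k3^2 = c^2*((g1-gb)^2+(g2-gb)^2+(g3-gb)^2)/gb^2"
      using gbp by (simp add: k1_def k2_def k3_def power_divide power2_eq_square field_simps)
    also have "\<dots> \<le> c^2*(3*gb^2/8)/gb^2"
      by (intro divide_right_mono mult_left_mono V) auto
    also have "\<dots> = 3*c^2/8" using gbp by simp
    finally show ?thesis .
  qed
  define Gb where "Gb = gb * Y*(1/2-Y) + c*(1-Y)"
  have Gb: "Gb \<ge> c/2"
  proof -
    have "gb*Y*(1/2-Y) \<ge> 0" using gbp Y0 Y1 by simp
    moreover have "c*(1-Y) \<ge> c/2" using c Y1 by (simp add: mult_left_mono[of "1/2" "1-Y" c, simplified])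
    ultimately show ?thesis by (simp add: Gb_def)
  qed
  have cc: "c^2/16 \<le> 19/1000 * (c/2)"
  proof -
    have "c*c \<le> (9/100)*c" using c by (intro mult_right_mono) auto
    then show ?thesis using c unfolding power2_eq_square by linarith
  qed
  have "((g1*y1*(1/2-y1) + c*(1-y1)) + (g2*y2*(1/2-y2) + c*(1-y2)) + (g3*y3*(1/2-y3) + c*(1-y3)))/3
        \<le> Gb + c^2/16"
  proof -
    have aux: "\<And>a b q ks cs::real. a = b - q/3 \<Longrightarrow> -ks/2 \<le> q \<Longrightarrow> ks \<le> 3*cs/8 \<Longrightarrow> a \<le> b + cs/16"
      by linarith
    show ?thesis using aux[OF L P K] by (simp only: Gb_def)
  qed
  also have "\<dots> \<le> kappa * Gb" using cc Gb by (simp add: kappa_def)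
  finally show ?thesis by (simp add: Gb_def gb_def)
qed


lemma core2:
  fixes g1 g2 y1 y2 c Y :: real
  assumes g: "1/2 \<le> g1" "g1 \<le> 1" "1/2 \<le> g2" "g2 \<le> 1"
    and y: "0 \<le> y1" "y1 \<le> 1/2" "0 \<le> y2" "y2 \<le> 1/2"
    and c: "0 \<le> c" "c \<le> 9/100"
    and Y: "Y = (g1*y1+g2*y2)/(g1+g2)"
  shows "((g1*y1*(1/2-y1) + c*(1-y1)) + (g2*y2*(1/2-y2) + c*(1-y2)))/2
     \<le> kappa * ((g1+g2)/2 * Y*(1/2-Y) + c*(1-Y))"
proof -
  define gb where "gb = (g1+g2)/2"
  have gbp: "gb \<ge> 1/2" "gb \<le> 1" using g by (auto simp: gb_def)
  have S: "g1+g2 > 0" using g by simp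
  have YS: "Y*(g1+g2) = g1*y1+g2*y2" using Y S by simp
  have sumY: "g1*(y1-Y) + g2*(y2-Y) = 0" using YS by (simp add: algebra_simps)
  have Y0: "0 \<le> Y" using Y S g y by simp
  have "g1*y1+g2*y2 \<le> (g1+g2)/2"
  proof -
    have "g1*y1 \<le> g1*(1/2)" "g2*y2 \<le> g2*(1/2)"
      using g y by (intro mult_left_mono; simp)+
    then show ?thesis by (simp add: field_simps)
  qed
  then have Y1: "Y \<le> 1/2" using Y S by (simp add: divide_le_eq)
  define e1 e2 where "e1 = y1 - Y" and "e2 = y2 - Y"
  define k1 k2 where "k1 = c*(g1-gb)/gb" and "k2 = c*(g2-gb)/gb"
  have A: "g1*y1*(1/2-y1) + g2*y2*(1/2-y2)
     = (g1+g2)*Y*(1/2-Y) + (1/2-2*Y)*(g1*e1+g2*e2) - (g1*e1^2+g2*e2^2)"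
    by (simp add: e1_def e2_def power2_eq_square algebra_simps)
  have A': "g1*y1*(1/2-y1) + g2*y2*(1/2-y2)
     = (g1+g2)*Y*(1/2-Y) - (g1*e1^2+g2*e2^2)"
    using A sumY by (simp add: e1_def e2_def)
  have B: "k1*e1+k2*e2 = -c*(e1+e2)"
  proof -
    have "k1*e1+k2*e2 = c*(g1*e1+g2*e2)/gb - c*(e1+e2)"
      using gbp by (simp add: k1_def k2_def field_simps)
    then show ?thesis using sumY by (simp add: e1_def e2_def)
  qed
  have L: "((g1*y1*(1/2-y1) + c*(1-y1)) + (g2*y2*(1/2-y2) + c*(1-y2)))/2
     = (gb * Y*(1/2-Y) + c*(1-Y)) - ((g1*e1^2 - k1*e1) + (g2*e2^2 - k2*e2))/2"
  proof -
    have C: "c*(1-y1)+c*(1-y2) = 2*c*(1-Y) - c*(e1+e2)"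
      by (simp add: e1_def e2_def algebra_simps)
    have "((g1*y1*(1/2-y1) + c*(1-y1)) + (g2*y2*(1/2-y2) + c*(1-y2)))/2
      = ((g1*y1*(1/2-y1) + g2*y2*(1/2-y2)) + (c*(1-y1)+c*(1-y2)))/2"
      by (simp add: algebra_simps)
    also have "\<dots> = ((g1+g2)*Y*(1/2-Y) - (g1*e1^2+g2*e2^2) + (2*c*(1-Y) - c*(e1+e2)))/2"
      by (simp only: A' C)
    also have "\<dots> = ((g1+g2)*Y*(1/2-Y) - (g1*e1^2+g2*e2^2) + (2*c*(1-Y) + (k1*e1+k2*e2)))/2"
      by (subst B) simp
    also have "\<dots> = (gb * Y*(1/2-Y) + c*(1-Y)) - ((g1*e1^2 - k1*e1) + (g2*e2^2 - k2*e2))/2"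
      by (simp add: gb_def field_simps)
    finally show ?thesis .
  qed
  have P: "(g1*e1^2 - k1*e1) + (g2*e2^2 - k2*e2) \<ge> -(k1^2+k2^2)/2"
    using pt[OF g(1), of e1 k1] pt[OF g(3), of e2 k2] by simp
  have V: "(g1-gb)^2+(g2-gb)^2 \<le> gb^2/4"
  proof -
    have "(g1-gb)^2+(g2-gb)^2 = g1^2+g2^2 - 2*gb^2"
      by (simp add: gb_def power2_eq_square field_simps)
    also have "\<dots> \<le> 3*gb - 1 - 2*gb^2"
      proof -
        have "g1+g2 = 2*gb" by (simp add: gb_def)
        then show ?thesis using sqb[OF g(1,2)] sqb[OF g(3,4)] by linarith
      qed
    also have "\<dots> \<le> gb^2/4"
    proof -
      have "(3*gb-2)^2 \<ge> 0" by simp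
      then show ?thesis by (simp add: power2_eq_square algebra_simps)
    qed
    finally show ?thesis .
  qed
  have K: "k1^2+k2^2 \<le> c^2/4"
  proof -
    have "k1^2+k2^2 = c^2*((g1-gb)^2+(g2-gb)^2)/gb^2"
      using gbp by (simp add: k1_def k2_def power_divide power2_eq_square field_simps)
    also have "\<dots> \<le> c^2*(gb^2/4)/gb^2"
      by (intro divide_right_mono mult_left_mono V) auto
    also have "\<dots> = c^2/4" using gbp by simp
    finally show ?thesis .
  qed
  define Gb where "Gb = gb * Y*(1/2-Y) + c*(1-Y)"
  have Gb: "Gb \<ge> c/2"
  proof -
    have "gb*Y*(1/2-Y) \<ge> 0" using gbp Y0 Y1 by simp
    moreover have "c*(1-Y) \<ge> c/2" using c Y1 by (simp add: mult_left_mono[of "1/2" "1-Y" c, simplified])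
    ultimately show ?thesis by (simp add: Gb_def)
  qed
  have cc: "c^2/16 \<le> 19/1000 * (c/2)"
  proof -
    have "c*c \<le> (9/100)*c" using c by (intro mult_right_mono) auto
    then show ?thesis using c unfolding power2_eq_square by linarith
  qed
  have "((g1*y1*(1/2-y1) + c*(1-y1)) + (g2*y2*(1/2-y2) + c*(1-y2)))/2
        \<le> Gb + c^2/16"
  proof -
    have aux: "\<And>a b q ks cs::real. a = b - q/2 \<Longrightarrow> -ks/2 \<le> q \<Longrightarrow> ks \<le> cs/4 \<Longrightarrow> a \<le> b + cs/16"
      by linarith
    show ?thesis using aux[OF L P K] by (simp only: Gb_def)
  qed
  also have "\<dots> \<le> kappa * Gb" using cc Gb by (simp add: kappa_def)
  finally show ?thesis by (simp add: Gb_def gb_def)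
qed

lemma G_alt:
  assumes "f < 1"
  shows "G \<xi> w f = (1-f)*(1-w/(1-f))*(1/2-(1-w/(1-f))) + (4*M_const*\<xi>)*(1-(1-w/(1-f)))"
  by (simp add: G_def Let_def)

lemma ybounds:
  fixes w f :: real
  assumes "f \<in> {0..1/2}" "(1 - f) / 2 \<le> w" "w \<le> 1 - f"
  shows "1/2 \<le> 1-f" "1-f \<le> 1" "0 \<le> 1-w/(1-f)" "1-w/(1-f) \<le> 1/2"
  using assms by (auto simp: field_simps)

lemma cbounds:
  fixes \<xi> :: real assumes "\<xi> \<in> {0..1/4}"
  shows "0 \<le> 4*M_const*\<xi>" "4*M_const*\<xi> \<le> 9/100"
proof -
  have s1: "sqrt 2 \<le> 3/2" by (rule real_le_lsqrt) (auto simp: power2_eq_square)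
  have s2: "141/100 \<le> sqrt 2" by (rule real_le_rsqrt) (auto simp: power2_eq_square)
  have M: "0 \<le> M_const" "M_const \<le> 9/100" using s1 s2 by (auto simp: M_const_def)
  show "0 \<le> 4*M_const*\<xi>" using M assms by simp
  have "M_const*\<xi> \<le> (9/100)*(1/4)" using M assms by (intro mult_mono) auto
  then show "4*M_const*\<xi> \<le> 9/100" by simp
qed

theorem lemma23:
  fixes w1 w2 w3 f1 f2 f3 \<xi> :: real
  assumes "w1 \<in> {0..1/2}" "w2 \<in> {0..1/2}" "w3 \<in> {0..1/2}"
    and "f1 \<in> {0..1/2}" "f2 \<in> {0..1/2}" "f3 \<in> {0..1/2}"
    and "(1 - f1) / 2 \<le> w1" "w1 \<le> 1 - f1"
    and "(1 - f2) / 2 \<le> w2" "w2 \<le> 1 - f2"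
    and "(1 - f3) / 2 \<le> w3" "w3 \<le> 1 - f3"
    and "\<xi> \<in> {0..1/4}"
  shows "(G \<xi> w1 f1 + G \<xi> w2 f2) / 2 \<le> kappa * G \<xi> ((w1 + w2) / 2) ((f1 + f2) / 2)
         \<and> (G \<xi> w1 f1 + G \<xi> w2 f2 + G \<xi> w3 f3) / 3
           \<le> kappa * G \<xi> ((w1 + w2 + w3) / 3) ((f1 + f2 + f3) / 3)"
proof -
  define c where "c = 4*M_const*\<xi>"
  have c: "0 \<le> c" "c \<le> 9/100" using cbounds[OF assms(13)] by (auto simp: c_def)
  define g1 g2 g3 where "g1 = 1-f1" and "g2 = 1-f2" and "g3 = 1-f3"
  define y1 y2 y3 where "y1 = 1-w1/g1" and "y2 = 1-w2/g2" and "y3 = 1-w3/g3"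
  note b1 = ybounds[OF assms(4,7,8), folded g1_def, folded y1_def]
  note b2 = ybounds[OF assms(5,9,10), folded g2_def, folded y2_def]
  note b3 = ybounds[OF assms(6,11,12), folded g3_def, folded y3_def]
  have G1: "G \<xi> w1 f1 = g1*y1*(1/2-y1) + c*(1-y1)"
    using G_alt[of f1] assms(4) by (simp add: g1_def y1_def c_def)
  have G2: "G \<xi> w2 f2 = g2*y2*(1/2-y2) + c*(1-y2)"
    using G_alt[of f2] assms(5) by (simp add: g2_def y2_def c_def)
  have G3: "G \<xi> w3 f3 = g3*y3*(1/2-y3) + c*(1-y3)"
    using G_alt[of f3] assms(6) by (simp add: g3_def y3_def c_def)
  define Y2 where "Y2 = (g1*y1+g2*y2)/(g1+g2)"
  define Y3 where "Y3 = (g1*y1+g2*y2+g3*y3)/(g1+g2+g3)"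
  have w1: "w1 = g1*(1-y1)" and w2: "w2 = g2*(1-y2)" and w3: "w3 = g3*(1-y3)"
    using b1 b2 b3 by (auto simp: y1_def y2_def y3_def)
  have GA2: "G \<xi> ((w1 + w2) / 2) ((f1 + f2) / 2) = (g1+g2)/2 * Y2*(1/2-Y2) + c*(1-Y2)"
  proof -
    have f: "(f1+f2)/2 < 1" using assms(4,5) by auto
    have e: "1 - (f1+f2)/2 = (g1+g2)/2" by (simp add: g1_def g2_def field_simps)
    have y: "1 - ((w1+w2)/2)/((g1+g2)/2) = Y2"
      using b1 b2 by (simp add: Y2_def w1 w2 field_simps)
    show ?thesis using G_alt[OF f, of \<xi> "(w1+w2)/2"] unfolding e y by (simp add: c_def)
  qed
  have GA3: "G \<xi> ((w1 + w2 + w3) / 3) ((f1 + f2 + f3) / 3) = (g1+g2+g3)/3 * Y3*(1/2-Y3) + c*(1-Y3)"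
  proof -
    have f: "(f1+f2+f3)/3 < 1" using assms(4,5,6) by auto
    have e: "1 - (f1+f2+f3)/3 = (g1+g2+g3)/3" by (simp add: g1_def g2_def g3_def field_simps)
    have y: "1 - ((w1+w2+w3)/3)/((g1+g2+g3)/3) = Y3"
      using b1 b2 b3 by (simp add: Y3_def w1 w2 w3 field_simps)
    show ?thesis using G_alt[OF f, of \<xi> "(w1+w2+w3)/3"] unfolding e y by (simp add: c_def)
  qed
  show ?thesis
    unfolding G1 G2 G3 GA2 GA3
    using core2[OF b1(1,2) b2(1,2) b1(3,4) b2(3,4) c Y2_def]
      core3[OF b1(1,2) b2(1,2) b3(1,2) b1(3,4) b2(3,4) b3(3,4) c Y3_def]
    by simp
qed


end
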